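(* If $G\subset \mathrm{Diff}^1_+([0,1])$ is $C^1$-close to the identity, then $G$ is without linked fixed points.
   Context: A group $G\subset \mathrm{Diff}^1_+([0,1])$ is $C^1$-close to the identity if there is a sequence $h_n\in \mathrm{Diff}^1_+([0,1])$ such that $h_n g h_n^{-1}\to \mathrm{id}$ in the $C^1$-topology as $n\to\infty$, for every $g\in G$. For a group $G$ of homeomorphisms of $[0,1]$, a pair of successive fixed points of $G$ is a pair $\{a,b\}$, $a<b$, such that $(a,b)$ is a connected component of $[0,1]\setminus \mathrm{Fix}(g)$ for some $g\in G$. Two pairs $\{a,b\}$ and $\{c,d\}$ are linked if $(a,b)\cap\{c,d\}$ or $(c,d)\cap\{a,b\}$ consists of exactly one point. $G$ is without linked fixed points if no two pairs of successive fixed points of $G$ are linked. *)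

theory Defs
  imports "HOL-Analysis.Analysis"
begin

text \<open>Maps are real functions; only their values on [0,1] are relevant.\<close>

definition C1_on01 :: "(real \<Rightarrow> real) \<Rightarrow> bool" where
  "C1_on01 f \<longleftrightarrow> (\<exists>f'. continuous_on {0..1} f' \<and>
      (\<forall>x\<in>{0..1}. (f has_real_derivative f' x) (at x within {0..1})))"

definition Diff1p :: "(real \<Rightarrow> real) set" where
  "Diff1p = {f. bij_betw f {0..1} {0..1} \<and> strict_mono_on {0..1} f \<and>
      C1_on01 f \<and> C1_on01 (inv_into {0..1} f)}"

definition is_group01 :: "(real \<Rightarrow> real) set \<Rightarrow> bool" where
  "is_group01 G \<longleftrightarrow> G \<subseteq> Diff1p \<and>
     (\<exists>k\<in>G. \<forall>x\<in>{0..1}. k x = x) \<and>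
     (\<forall>f\<in>G. \<forall>g\<in>G. \<exists>k\<in>G. \<forall>x\<in>{0..1}. k x = f (g x)) \<and>
     (\<forall>g\<in>G. \<exists>k\<in>G. \<forall>x\<in>{0..1}. k x = inv_into {0..1} g x)"

definition C1_tendsto_id :: "(nat \<Rightarrow> real \<Rightarrow> real) \<Rightarrow> bool" where
  "C1_tendsto_id k \<longleftrightarrow> (\<exists>d :: nat \<Rightarrow> real \<Rightarrow> real.
      (\<forall>n. \<forall>x\<in>{0..1}. (k n has_real_derivative d n x) (at x within {0..1})) \<and>
      (\<forall>e>0. \<forall>\<^sub>F n in sequentially. \<forall>x\<in>{0..1}.
           \<bar>k n x - x\<bar> < e \<and> \<bar>d n x - 1\<bar> < e))"

definition C1_close_to_id :: "(real \<Rightarrow> real) set \<Rightarrow> bool" where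
  "C1_close_to_id G \<longleftrightarrow> (\<exists>h :: nat \<Rightarrow> real \<Rightarrow> real. (\<forall>n. h n \<in> Diff1p) \<and>
      (\<forall>g\<in>G. C1_tendsto_id (\<lambda>n x. h n (g (inv_into {0..1} (h n) x)))))"

definition Fix01 :: "(real \<Rightarrow> real) \<Rightarrow> real set" where
  "Fix01 g = {x\<in>{0..1}. g x = x}"

definition succ_fixed_pair :: "(real \<Rightarrow> real) set \<Rightarrow> real \<Rightarrow> real \<Rightarrow> bool" where
  "succ_fixed_pair G a b \<longleftrightarrow> a < b \<and>
     (\<exists>g\<in>G. {a<..<b} \<in> components ({0..1} - Fix01 g))"

definition linked :: "real \<Rightarrow> real \<Rightarrow> real \<Rightarrow> real \<Rightarrow> bool" where
  "linked a b c d \<longleftrightarrow> card ({a<..<b} \<inter> {c, d}) = 1 \<or> card ({c<..<d} \<inter> {a, b}) = 1"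

definition without_linked_fixed_points :: "(real \<Rightarrow> real) set \<Rightarrow> bool" where
  "without_linked_fixed_points G \<longleftrightarrow>
     \<not> (\<exists>a b c d. succ_fixed_pair G a b \<and> succ_fixed_pair G c d \<and> linked a b c d)"

end

theory Submission
  imports Defs "HOL-Analysis.Analysis"
begin

lemma diff_facts:
  assumes "f \<in> Diff1p"
  shows "strict_mono_on {0..1} f" "\<And>x. x \<in> {0..1} \<Longrightarrow> f x \<in> {0..1}" "inj_on f {0..1}"
    "continuous_on {0..1} f" "f ` {0..1} = {0..1}"
proof -
  show "strict_mono_on {0..1} f" using assms unfolding Diff1p_def by auto
  have b: "bij_betw f {0..1} {0..1}" using assms unfolding Diff1p_def by auto
  then show "\<And>x. x \<in> {0..1} \<Longrightarrow> f x \<in> {0..1}" "inj_on f {0..1}" "f ` {0..1} = {0..1}"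
    by (auto simp: bij_betw_def)
  obtain f' where "\<forall>x\<in>{0..1}. (f has_real_derivative f' x) (at x within {0..1})"
    using assms unfolding Diff1p_def C1_on01_def by auto
  then show "continuous_on {0..1} f" by (intro DERIV_continuous_on) auto
qed

lemma lin_growth:
  fixes k d :: "real\<Rightarrow>real"
  assumes "\<forall>x\<in>{0..1}. (k has_real_derivative d x) (at x within {0..1})"
    "\<forall>x\<in>{0..1}. \<bar>d x - 1\<bar> < 1/4" "0\<le>p" "p\<le>q" "q\<le>1"
  shows "k q - k p \<ge> 3/4*(q-p)"
proof -
  let ?\<phi> = "\<lambda>x. k x - 3/4*x"
  have "?\<phi> p \<le> ?\<phi> q"
  proof (rule DERIV_nonneg_imp_increasing_open[OF \<open>p\<le>q\<close>])
    fix x assume "p<x" "x<q"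
    then have x: "x\<in>{0..1}" "0<x" "x<1" using assms by auto
    have "(k has_real_derivative d x) (at x)" using assms(1) x(1) at_within_Icc_at[of 0 x 1] x(2,3) by metis
    then have "(?\<phi> has_real_derivative d x - 3/4*1) (at x)"
      by (intro DERIV_diff DERIV_cmult DERIV_ident)
    moreover have "\<bar>d x - 1\<bar> < 1/4" using assms(2) x(1) by blast
    then have "d x - 3/4*1 \<ge> 0" by linarith
    ultimately show "\<exists>y. DERIV ?\<phi> x :> y \<and> y \<ge> 0" by blast
  next
    have "continuous_on {0..1} k" by (rule DERIV_continuous_on) (use assms(1) in auto)
    then have "continuous_on {p..q} k" by (rule continuous_on_subset) (use assms in auto)
    then show "continuous_on {p..q} ?\<phi>" by (intro continuous_intros)
  qed
  thus ?thesis by simp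
qed

lemma core:
  assumes "C1_close_to_id G" "A\<in>G" "B\<in>G" "A\<in>Diff1p" "B\<in>Diff1p" "0\<le>u" "u<v" "v\<le>1"
    "u \<le> A u" "A v \<le> B u" "B v \<le> v"
  shows False
proof -
  obtain h where h: "\<forall>n. h n \<in> Diff1p" and
    hG: "\<forall>g\<in>G. C1_tendsto_id (\<lambda>n x. h n (g (inv_into {0..1} (h n) x)))"
    using assms(1) unfolding C1_close_to_id_def by blast
  obtain dA where dA1: "\<forall>n. \<forall>x\<in>{0..1}. ((\<lambda>x. h n (A (inv_into {0..1} (h n) x))) has_real_derivative dA n x) (at x within {0..1})"
    and dA2: "\<forall>e>0. \<forall>\<^sub>F n in sequentially. \<forall>x\<in>{0..1}. \<bar>h n (A (inv_into {0..1} (h n) x)) - x\<bar> < e \<and> \<bar>dA n x - 1\<bar> < e"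
    using hG assms(2) unfolding C1_tendsto_id_def by blast
  obtain dB where dB1: "\<forall>n. \<forall>x\<in>{0..1}. ((\<lambda>x. h n (B (inv_into {0..1} (h n) x))) has_real_derivative dB n x) (at x within {0..1})"
    and dB2: "\<forall>e>0. \<forall>\<^sub>F n in sequentially. \<forall>x\<in>{0..1}. \<bar>h n (B (inv_into {0..1} (h n) x)) - x\<bar> < e \<and> \<bar>dB n x - 1\<bar> < e"
    using hG assms(3) unfolding C1_tendsto_id_def by blast
  have "\<forall>\<^sub>F n in sequentially. (\<forall>x\<in>{0..1}. \<bar>dA n x - 1\<bar> < 1/4) \<and> (\<forall>x\<in>{0..1}. \<bar>dB n x - 1\<bar> < 1/4)"
    using eventually_conj[OF dA2[rule_format, of "1/4"] dB2[rule_format, of "1/4"]]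
    by (auto elim: eventually_mono)
  then obtain n where nA: "\<forall>x\<in>{0..1}. \<bar>dA n x - 1\<bar> < 1/4" and nB: "\<forall>x\<in>{0..1}. \<bar>dB n x - 1\<bar> < 1/4"
    using eventually_sequentially by auto
  define H where "H = h n"
  have HD: "H \<in> Diff1p" using h H_def by auto
  note Hf = diff_facts[OF HD]
  note Af = diff_facts[OF assms(4)]
  note Bf = diff_facts[OF assms(5)]
  have inv: "\<And>x. x\<in>{0..1} \<Longrightarrow> inv_into {0..1} H (H x) = x" using Hf(3) by auto
  have u01: "u\<in>{0..1}" and v01: "v\<in>{0..1}" using assms by auto
  have gA: "H (A v) - H (A u) \<ge> 3/4*(H v - H u)"
    using lin_growth[of "\<lambda>x. H (A (inv_into {0..1} H x))" "dA n" "H u" "H v"] dA1 nA H_def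
      inv[OF u01] inv[OF v01] Hf(2)[OF u01] Hf(2)[OF v01]
      strict_mono_onD[OF Hf(1) u01 v01 assms(7)] by auto
  have gB: "H (B v) - H (B u) \<ge> 3/4*(H v - H u)"
    using lin_growth[of "\<lambda>x. H (B (inv_into {0..1} H x))" "dB n" "H u" "H v"] dB1 nB H_def
      inv[OF u01] inv[OF v01] Hf(2)[OF u01] Hf(2)[OF v01]
      strict_mono_onD[OF Hf(1) u01 v01 assms(7)] by auto
  have m: "\<And>x y. x\<in>{0..1} \<Longrightarrow> y\<in>{0..1} \<Longrightarrow> x \<le> y \<Longrightarrow> H x \<le> H y"
    using Hf(1) by (metis order.order_iff_strict strict_mono_onD)
  have "H u \<le> H (A u)" using m u01 Af(2)[OF u01] assms(9) by auto
  moreover have "H (A v) \<le> H (B u)" using m Bf(2)[OF u01] Af(2)[OF v01] assms(10) by auto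
  moreover have "H (B v) \<le> H v" using m v01 Bf(2)[OF v01] assms(11) by auto
  moreover have "H u < H v" using strict_mono_onD[OF Hf(1) u01 v01 assms(7)] .
  ultimately show False using gA gB by (simp add: field_simps)
qed


lemma grp_Diff: "is_group01 G \<Longrightarrow> g \<in> G \<Longrightarrow> g \<in> Diff1p"
  unfolding is_group01_def by auto

lemma grp_comp: "is_group01 G \<Longrightarrow> f\<in>G \<Longrightarrow> g\<in>G \<Longrightarrow> \<exists>k\<in>G. \<forall>x\<in>{0..1}. k x = f (g x)"
  unfolding is_group01_def by blast

lemma grp_inv: "is_group01 G \<Longrightarrow> g\<in>G \<Longrightarrow> \<exists>k\<in>G. \<forall>x\<in>{0..1}. k x = inv_into {0..1} g x"
  unfolding is_group01_def by blast

lemma grp_iter: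
  assumes "is_group01 G" "q\<in>G"
  shows "\<exists>k\<in>G. \<forall>x\<in>{0..1}. k x = (q^^K) x"
proof (induction K)
  case 0
  then show ?case using assms(1) unfolding is_group01_def by auto
next
  case (Suc K)
  then obtain k where k: "k\<in>G" "\<forall>x\<in>{0..1}. k x = (q^^K) x" by blast
  obtain k' where "k'\<in>G" "\<forall>x\<in>{0..1}. k' x = q (k x)" using grp_comp[OF assms(1,2) k(1)] by blast
  then show ?case using k by auto
qed

lemma sign_const:
  fixes g :: "real \<Rightarrow> real"
  assumes "continuous_on {a..b} g" "\<forall>x\<in>{a<..<b}. g x \<noteq> x"
  shows "(\<forall>x\<in>{a<..<b}. g x > x) \<or> (\<forall>x\<in>{a<..<b}. g x < x)"
proof (rule ccontr)
  assume H: "\<not> ?thesis"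
  then obtain x where x1: "x\<in>{a<..<b}" and x2: "\<not> g x > x" by blast
  from H obtain y where y1: "y\<in>{a<..<b}" and y2: "\<not> g y < y" by blast
  have "g x \<noteq> x" using assms(2) x1 by blast
  then have x: "g x < x" using x2 by linarith
  have "g y \<noteq> y" using assms(2) y1 by blast
  then have y: "g y > y" using y2 by linarith
  have c: "\<And>p q. p\<in>{a<..<b} \<Longrightarrow> q\<in>{a<..<b} \<Longrightarrow> continuous_on {p..q} (\<lambda>t. g t - t)"
  proof -
    fix p q assume "p\<in>{a<..<b}" "q\<in>{a<..<b}"
    then have "{p..q} \<subseteq> {a..b}" by auto
    then have "continuous_on {p..q} g" using assms(1) continuous_on_subset by blast
    then show "continuous_on {p..q} (\<lambda>t. g t - t)" by (intro continuous_intros)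
  qed
  have nz: "\<And>t. t \<in> {a<..<b} \<Longrightarrow> g t - t \<noteq> 0" using assms(2) by auto
  show False
  proof (cases "x \<le> y")
    case True
    then obtain t where t: "x \<le> t" "t \<le> y" "g t - t = 0"
      using IVT'[of "\<lambda>t. g t - t" x 0 y] c[OF x1 y1] x y by auto
    then have "t \<in> {a<..<b}" using x1 y1 by auto
    then show False using nz t(3) by blast
  next
    case False
    then obtain t where t: "y \<le> t" "t \<le> x" "g t - t = 0"
      using IVT2'[of "\<lambda>t. g t - t" x 0 y] c[OF y1 x1] x y by auto
    then have "t \<in> {a<..<b}" using x1 y1 by auto
    then show False using nz t(3) by blast
  qed
qed

lemma pair_basic:
  assumes "{a<..<b} \<in> components ({0..1} - Fix01 g)" "a<b" "continuous_on {0..1} g"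
  shows "0\<le>a" "b\<le>1" "g a = a" "g b = b" "\<forall>x\<in>{a<..<b}. g x \<noteq> x"
proof -
  have sub: "{a<..<b} \<subseteq> {0..1} - Fix01 g" and
    max: "\<And>D. D \<noteq> {} \<Longrightarrow> {a<..<b} \<subseteq> D \<Longrightarrow> D \<subseteq> {0..1} - Fix01 g \<Longrightarrow> connected D \<Longrightarrow> D = {a<..<b}"
    using assms(1) unfolding in_components_maximal by auto
  show a0: "0\<le>a"
  proof (rule ccontr)
    assume "\<not> 0\<le>a"
    define x where "x = (a + min b 0)/2"
    have "x \<in> {a<..<b}" "x < 0" using assms(2) \<open>\<not> 0\<le>a\<close> unfolding x_def by (auto simp: min_def)
    then show False using sub by auto
  qed
  show b1: "b\<le>1"
  proof (rule ccontr)
    assume "\<not> b\<le>1"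
    define x where "x = (b + max a 1)/2"
    have "x \<in> {a<..<b}" "x > 1" using assms(2) \<open>\<not> b\<le>1\<close> unfolding x_def by (auto simp: max_def)
    then show False using sub by auto
  qed
  show "\<forall>x\<in>{a<..<b}. g x \<noteq> x" using sub unfolding Fix01_def by auto
  show "g a = a"
  proof (rule ccontr)
    assume "g a \<noteq> a"
    have "{a..<b} \<subseteq> {0..1} - Fix01 g"
    proof
      fix x assume x: "x \<in> {a..<b}"
      show "x \<in> {0..1} - Fix01 g"
      proof (cases "x = a")
        case True
        then show ?thesis using a0 b1 assms(2) \<open>g a \<noteq> a\<close> by (auto simp: Fix01_def)
      next
        case False
        then have "x\<in>{a<..<b}" using x by auto
        then show ?thesis using sub by blast
      qed
    qed
    moreover have "{a..<b} \<noteq> {}" "{a<..<b} \<subseteq> {a..<b}" "connected {a..<b}" using assms(2) by auto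
    ultimately have "{a..<b} = {a<..<b}" by (intro max)
    moreover have "a \<in> {a..<b}" using assms(2) by auto
    ultimately show False by auto
  qed
  show "g b = b"
  proof (rule ccontr)
    assume "g b \<noteq> b"
    have "{a<..b} \<subseteq> {0..1} - Fix01 g"
    proof
      fix x assume x: "x \<in> {a<..b}"
      show "x \<in> {0..1} - Fix01 g"
      proof (cases "x = b")
        case True
        then show ?thesis using a0 b1 assms(2) \<open>g b \<noteq> b\<close> by (auto simp: Fix01_def)
      next
        case False
        then have "x\<in>{a<..<b}" using x by auto
        then show ?thesis using sub by blast
      qed
    qed
    moreover have "{a<..b} \<noteq> {}" "{a<..<b} \<subseteq> {a<..b}" "connected {a<..b}" using assms(2) by auto
    ultimately have "{a<..b} = {a<..<b}" by (intro max)
    moreover have "b \<in> {a<..b}" using assms(2) by auto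
    ultimately show False by auto
  qed
qed

lemma diff_mono:
  assumes "f \<in> Diff1p" "x\<in>{0..1}" "y\<in>{0..1}" "x \<le> y"
  shows "f x \<le> f y"
proof (cases "x = y")
  case False
  then show ?thesis using strict_mono_onD[OF diff_facts(1)[OF assms(1)] assms(2,3)] assms(4) by auto
qed simp

lemma inv_sign:
  assumes "g \<in> Diff1p" "0\<le>a" "a<b" "b\<le>1" "g a = a" "g b = b" "x\<in>{a<..<b}"
  shows "inv_into {0..1} g x \<in> {a<..<b}" "g (inv_into {0..1} g x) = x"
proof -
  note gf = diff_facts[OF assms(1)]
  have x01: "x \<in> {0..1}" using assms by auto
  define y where "y = inv_into {0..1} g x"
  have y01: "y \<in> {0..1}" unfolding y_def using x01 gf(5) by (metis inv_into_into)
  show gy: "g (inv_into {0..1} g x) = x" using x01 gf(5) by (metis f_inv_into_f)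
  have "\<not> y \<le> a"
  proof
    assume "y \<le> a"
    then have "g y \<le> g a" using diff_mono[OF assms(1) y01, of a] assms by auto
    then show False using gy assms unfolding y_def by auto
  qed
  moreover have "\<not> y \<ge> b"
  proof
    assume "y \<ge> b"
    then have "g b \<le> g y" using diff_mono[OF assms(1) _ y01, of b] assms by auto
    then show False using gy assms unfolding y_def by auto
  qed
  ultimately show "inv_into {0..1} g x \<in> {a<..<b}" unfolding y_def by auto
qed

lemma pair_facts:
  assumes "is_group01 G" "succ_fixed_pair G a b"
  shows "a<b" "0\<le>a" "b\<le>1"
    "\<exists>P\<in>G. P a = a \<and> P b = b \<and> (\<forall>x\<in>{a<..<b}. P x > x)"
    "\<exists>Q\<in>G. Q a = a \<and> Q b = b \<and> (\<forall>x\<in>{a<..<b}. Q x < x)"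
proof -
  show ab: "a<b" using assms(2) unfolding succ_fixed_pair_def by auto
  obtain g where g: "g\<in>G" "{a<..<b} \<in> components ({0..1} - Fix01 g)"
    using assms(2) unfolding succ_fixed_pair_def by auto
  have gD: "g \<in> Diff1p" using grp_Diff[OF assms(1) g(1)] .
  note gf = diff_facts[OF gD]
  note pb = pair_basic[OF g(2) ab gf(4)]
  show a0: "0\<le>a" and b1: "b\<le>1" using pb by auto
  obtain k where k: "k\<in>G" "\<forall>x\<in>{0..1}. k x = inv_into {0..1} g x" using grp_inv[OF assms(1) g(1)] by blast
  have a01: "a \<in> {0..1}" and b01: "b\<in>{0..1}" using a0 ab b1 by auto
  have ka: "k a = a" using k(2) a01 inv_into_f_f[OF gf(3) a01] pb(3) by auto
  have kb: "k b = b" using k(2) b01 inv_into_f_f[OF gf(3) b01] pb(4) by auto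
  have kx: "\<And>x. x\<in>{a<..<b} \<Longrightarrow> k x \<in> {a<..<b} \<and> g (k x) = x"
    using inv_sign[OF gD a0 ab b1 pb(3,4)] k(2) a0 b1 by force
  have cab: "continuous_on {a..b} g" by (rule continuous_on_subset[OF gf(4)]) (use a0 b1 in auto)
  from sign_const[OF cab pb(5)]
  have "(\<forall>x\<in>{a<..<b}. g x > x \<and> k x < x) \<or> (\<forall>x\<in>{a<..<b}. g x < x \<and> k x > x)"
  proof
    assume h: "\<forall>x\<in>{a<..<b}. g x > x"
    have "\<forall>x\<in>{a<..<b}. k x < x"
    proof
      fix x assume "x\<in>{a<..<b}"
      then show "k x < x" using kx[of x] h by force
    qed
    then show ?thesis using h by auto
  next
    assume h: "\<forall>x\<in>{a<..<b}. g x < x"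
    have "\<forall>x\<in>{a<..<b}. k x > x"
    proof
      fix x assume "x\<in>{a<..<b}"
      then show "k x > x" using kx[of x] h by force
    qed
    then show ?thesis using h by auto
  qed
  then show "\<exists>P\<in>G. P a = a \<and> P b = b \<and> (\<forall>x\<in>{a<..<b}. P x > x)"
    "\<exists>Q\<in>G. Q a = a \<and> Q b = b \<and> (\<forall>x\<in>{a<..<b}. Q x < x)"
    using g(1) k(1) ka kb pb(3,4) by blast+
qed


lemma iter_conv:
  fixes Q :: "real\<Rightarrow>real"
  assumes cont: "continuous_on {c..b} Q" and dec: "\<forall>x\<in>{c<..<b}. c < Q x \<and> Q x < x"
    and y: "y \<in> {c<..<b}"
  shows "\<forall>K. (Q^^K) y \<in> {c<..y}" "z > c \<Longrightarrow> \<exists>K. (Q^^K) y < z"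
proof -
  show it: "\<forall>K. (Q^^K) y \<in> {c<..y}"
  proof
    fix K show "(Q^^K) y \<in> {c<..y}"
    proof (induction K)
      case 0 then show ?case using y by auto
    next
      case (Suc K)
      then have "(Q^^K) y \<in> {c<..<b}" using y by auto
      then show ?case using dec Suc by force
    qed
  qed
  assume zc: "z > c"
  show "\<exists>K. (Q^^K) y < z"
  proof (rule ccontr)
    assume "\<not> ?thesis"
    then have ge: "\<forall>K. z \<le> (Q^^K) y" by (simp add: not_less)
    define s where "s = (\<lambda>K. (Q^^K) y)"
    have sb: "\<And>K. s K \<in> {c<..<b}"
    proof -
      fix K have "(Q^^K) y \<in> {c<..y}" using it by blast
      then show "s K \<in> {c<..<b}" using y unfolding s_def by auto
    qed
    have sS: "\<And>K. s (Suc K) = Q (s K)" unfolding s_def by simp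
    have "decseq s"
    proof (rule decseq_SucI)
      fix n have "s n \<in> {c<..<b}" by (rule sb)
      then show "s (Suc n) \<le> s n" unfolding sS using dec by force
    qed
    then obtain L where L: "s \<longlonglongrightarrow> L" "\<forall>i. L \<le> s i" using decseq_convergent[of s z] ge s_def by auto
    have Lz: "z \<le> L" using L(1) ge unfolding s_def by (intro LIMSEQ_le_const) auto
    have Ly: "L \<le> y" using L(2)[rule_format, of 0] unfolding s_def by simp
    have Lcb: "L \<in> {c<..<b}" using Lz Ly zc y by auto
    have "(\<lambda>K. Q (s K)) \<longlonglongrightarrow> Q L"
      by (rule continuous_on_tendsto_compose[OF cont L(1)]) (use Lcb sb in \<open>auto intro!: always_eventually less_imp_le\<close>)
    moreover have "(\<lambda>K. Q (s K)) \<longlonglongrightarrow> L" using LIMSEQ_Suc[OF L(1)] sS by simp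
    ultimately have "Q L = L" using LIMSEQ_unique by blast
    then show False using dec Lcb by force
  qed
qed


lemma case_main:
  fixes P Q :: "real\<Rightarrow>real"
  assumes "c<b" "\<forall>x\<in>{c..<b}. x < P x \<and> P x < b"
    "continuous_on {c..b} Q" "\<forall>x\<in>{c<..<b}. c < Q x \<and> Q x < x"
  shows "\<exists>M K. c < P c \<and> c \<le> (Q^^K) ((Q^^M) (P c)) \<and> (Q^^K) ((Q^^M) (P (P c))) \<le> (Q^^M) (P c)
     \<and> (Q^^M) (P (P c)) \<le> P c"
proof -
  define e where "e = P c"
  have e: "e \<in> {c<..<b}" using assms(1,2) unfolding e_def by auto
  have "e \<in> {c..<b}" using e by auto
  then have "e < P e \<and> P e < b" using assms(2) by blast
  then have Pe: "P e \<in> {c<..<b}" using e by auto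
  obtain M where M: "(Q^^M) (P e) < e" using iter_conv(2)[OF assms(3,4) Pe] e by auto
  define \<alpha> where "\<alpha> = (Q^^M) e"
  define \<beta> where "\<beta> = (Q^^M) (P e)"
  have "\<alpha> \<in> {c<..e}" using iter_conv(1)[OF assms(3,4) e] unfolding \<alpha>_def by blast
  then have \<alpha>: "\<alpha> \<in> {c<..<b}" using e by auto
  have "\<beta> \<in> {c<..P e}" using iter_conv(1)[OF assms(3,4) Pe] unfolding \<beta>_def by blast
  then have \<beta>: "\<beta> \<in> {c<..<b}" using Pe by auto
  obtain K where K: "(Q^^K) \<beta> < \<alpha>" using iter_conv(2)[OF assms(3,4) \<beta>] \<alpha> by auto
  have "(Q^^K) \<alpha> \<in> {c<..\<alpha>}" using iter_conv(1)[OF assms(3,4) \<alpha>] by blast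
  then show ?thesis using K M e unfolding \<alpha>_def \<beta>_def e_def
    by (intro exI[of _ M] exI[of _ K]) auto
qed

lemma iter_neg: "((\<lambda>x. - Q (- x))^^K) x = - ((Q^^K) (- (x::real)))" for Q :: "real \<Rightarrow> real"
proof (induction K arbitrary: x)
  case 0 show ?case by simp
next
  case (Suc K) show ?case using Suc by simp
qed

lemma case_mirror:
  fixes R Q :: "real\<Rightarrow>real"
  assumes "a<d" "\<forall>x\<in>{a<..d}. a < R x \<and> R x < x" "continuous_on {a..d} Q"
    "\<forall>x\<in>{a<..<d}. x < Q x \<and> Q x < d"
  shows "\<exists>M K. R d < d \<and> R d \<le> (Q^^M) (R (R d)) \<and> (Q^^M) (R d) \<le> (Q^^K) ((Q^^M) (R (R d)))
     \<and> (Q^^K) ((Q^^M) (R d)) \<le> d"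
proof -
  have h2: "\<forall>x\<in>{-d..<-a}. x < - R (- x) \<and> - R (- x) < - a"
  proof
    fix x assume "x\<in>{-d..<-a}"
    then have "-x \<in> {a<..d}" by auto
    then show "x < - R (- x) \<and> - R (- x) < - a" using assms(2) by force
  qed
  have h4: "\<forall>x\<in>{-d<..<-a}. -d < - Q (- x) \<and> - Q (- x) < x"
  proof
    fix x assume "x\<in>{-d<..<-a}"
    then have "-x \<in> {a<..<d}" by auto
    then show "-d < - Q (- x) \<and> - Q (- x) < x" using assms(4) by force
  qed
  have h3: "continuous_on {-d..-a} (\<lambda>x. - Q (- x))"
  proof -
    have "continuous_on {-d..-a} (\<lambda>x. -x)" by (intro continuous_intros)
    moreover have "(\<lambda>x. -x) ` {-d..-a} \<subseteq> {a..d}" by auto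
    ultimately have "continuous_on {-d..-a} (\<lambda>x. Q (- x))"
      using continuous_on_compose2[OF assms(3)] by blast
    then show ?thesis by (intro continuous_intros)
  qed
  from case_main[of "-d" "-a" "\<lambda>x. - R (- x)" "\<lambda>x. - Q (- x)", OF _ h2 h3 h4] assms(1)
  obtain M K where "- d < - R d \<and> - d \<le> - (Q ^^ K) ((Q ^^ M) (R d)) \<and>
    - (Q ^^ K) ((Q ^^ M) (R (R d))) \<le> - (Q ^^ M) (R d) \<and> - (Q ^^ M) (R (R d)) \<le> - R d"
    by (auto simp: iter_neg)
  then show ?thesis by (intro exI[of _ M] exI[of _ K]) auto
qed



lemma case_i:
  assumes G: "is_group01 G" "C1_close_to_id G" and p1: "succ_fixed_pair G a b"
    and p2: "succ_fixed_pair G c d" and ac: "a<c" and cb: "c<b" and bd: "b\<le>d"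
  shows False
proof -
  note f1 = pair_facts[OF G(1) p1] and f2 = pair_facts[OF G(1) p2]
  obtain P where P: "P\<in>G" "P a = a" "P b = b" "\<forall>x\<in>{a<..<b}. P x > x" using f1(4) by blast
  obtain Q where Q: "Q\<in>G" "Q c = c" "Q d = d" "\<forall>x\<in>{c<..<d}. Q x < x" using f2(5) by blast
  have PD: "P \<in> Diff1p" using grp_Diff G(1) P(1) by blast
  have QD: "Q \<in> Diff1p" using grp_Diff G(1) Q(1) by blast
  have b01: "b \<in> {0..1}" and c01: "c \<in> {0..1}" using f1 f2 ac cb by auto
  have h2: "\<forall>x\<in>{c..<b}. x < P x \<and> P x < b"
  proof
    fix x assume x: "x\<in>{c..<b}"
    then have x1: "x \<in>{a<..<b}" using ac by auto
    then have x01: "x \<in> {0..1}" using f1 by auto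
    have "P x < P b" using strict_mono_onD[OF diff_facts(1)[OF PD] x01 b01] x by auto
    then show "x < P x \<and> P x < b" using P x1 by auto
  qed
  have "{c..b} \<subseteq> {0..1}" using b01 c01 by auto
  then have h3: "continuous_on {c..b} Q" using continuous_on_subset[OF diff_facts(4)[OF QD]] by blast
  have h4: "\<forall>x\<in>{c<..<b}. c < Q x \<and> Q x < x"
  proof
    fix x assume x: "x\<in>{c<..<b}"
    then have x1: "x \<in>{c<..<d}" using bd by auto
    have x01: "x \<in> {0..1}" using x b01 c01 by auto
    have "Q c < Q x" using strict_mono_onD[OF diff_facts(1)[OF QD] c01 x01] x by auto
    then show "c < Q x \<and> Q x < x" using Q x1 by auto
  qed
  obtain M K where MK: "c < P c" "c \<le> (Q^^K) ((Q^^M) (P c))" "(Q^^K) ((Q^^M) (P (P c))) \<le> (Q^^M) (P c)"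
     "(Q^^M) (P (P c)) \<le> P c" using case_main[OF cb h2 h3 h4] by blast
  obtain QM where QM: "QM\<in>G" "\<forall>x\<in>{0..1}. QM x = (Q^^M) x" using grp_iter[OF G(1) Q(1)] by blast
  obtain QK where QK: "QK\<in>G" "\<forall>x\<in>{0..1}. QK x = (Q^^K) x" using grp_iter[OF G(1) Q(1)] by blast
  obtain A where A: "A\<in>G" "\<forall>x\<in>{0..1}. A x = QM (P x)" using grp_comp[OF G(1) QM(1) P(1)] by blast
  obtain B where B: "B\<in>G" "\<forall>x\<in>{0..1}. B x = QK (A x)" using grp_comp[OF G(1) QK(1) A(1)] by blast
  have AD: "A \<in> Diff1p" using grp_Diff G(1) A(1) by blast
  have BD: "B \<in> Diff1p" using grp_Diff G(1) B(1) by blast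
  have Pc: "P c \<in> {0..1}" using diff_facts(2)[OF PD c01] .
  have PPc: "P (P c) \<in> {0..1}" using diff_facts(2)[OF PD Pc] .
  have Ac: "A c = (Q^^M) (P c)" using A(2) QM(2) c01 Pc by auto
  have APc: "A (P c) = (Q^^M) (P (P c))" using A(2) QM(2) Pc PPc by auto
  have Bc: "B c = (Q^^K) ((Q^^M) (P c))" using B(2) QK(2) c01 diff_facts(2)[OF AD c01] Ac by auto
  have BPc: "B (P c) = (Q^^K) ((Q^^M) (P (P c)))" using B(2) QK(2) Pc diff_facts(2)[OF AD Pc] APc by auto
  show False
    using core[OF G(2) B(1) A(1) BD AD, of c "P c"] c01 Pc MK Ac APc Bc BPc by auto
qed

lemma case_iii:
  assumes G: "is_group01 G" "C1_close_to_id G" and p1: "succ_fixed_pair G a b"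
    and p2: "succ_fixed_pair G a d" and db: "d<b"
  shows False
proof -
  note f1 = pair_facts[OF G(1) p1] and f2 = pair_facts[OF G(1) p2]
  obtain R where R: "R\<in>G" "R a = a" "R b = b" "\<forall>x\<in>{a<..<b}. R x < x" using f1(5) by blast
  obtain Q where Q: "Q\<in>G" "Q a = a" "Q d = d" "\<forall>x\<in>{a<..<d}. Q x > x" using f2(4) by blast
  have RD: "R \<in> Diff1p" using grp_Diff G(1) R(1) by blast
  have QD: "Q \<in> Diff1p" using grp_Diff G(1) Q(1) by blast
  have a01: "a \<in> {0..1}" and d01: "d \<in> {0..1}" using f1 f2 db by auto
  have ad: "a < d" using f2(1) .
  have h2: "\<forall>x\<in>{a<..d}. a < R x \<and> R x < x"
  proof
    fix x assume x: "x\<in>{a<..d}"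
    then have x1: "x \<in>{a<..<b}" using db by auto
    then have x01: "x \<in> {0..1}" using f1 by auto
    have "R a < R x" using strict_mono_onD[OF diff_facts(1)[OF RD] a01 x01] x by auto
    then show "a < R x \<and> R x < x" using R x1 by auto
  qed
  have "{a..d} \<subseteq> {0..1}" using a01 d01 by auto
  then have h3: "continuous_on {a..d} Q" using continuous_on_subset[OF diff_facts(4)[OF QD]] by blast
  have h4: "\<forall>x\<in>{a<..<d}. x < Q x \<and> Q x < d"
  proof
    fix x assume x: "x\<in>{a<..<d}"
    have x01: "x \<in> {0..1}" using x a01 d01 by auto
    have "Q x < Q d" using strict_mono_onD[OF diff_facts(1)[OF QD] x01 d01] x by auto
    then show "x < Q x \<and> Q x < d" using Q x by auto
  qed
  obtain M K where MK: "R d < d" "R d \<le> (Q^^M) (R (R d))" "(Q^^M) (R d) \<le> (Q^^K) ((Q^^M) (R (R d)))"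
     "(Q^^K) ((Q^^M) (R d)) \<le> d" using case_mirror[OF ad h2 h3 h4] by blast
  obtain QM where QM: "QM\<in>G" "\<forall>x\<in>{0..1}. QM x = (Q^^M) x" using grp_iter[OF G(1) Q(1)] by blast
  obtain QK where QK: "QK\<in>G" "\<forall>x\<in>{0..1}. QK x = (Q^^K) x" using grp_iter[OF G(1) Q(1)] by blast
  obtain A where A: "A\<in>G" "\<forall>x\<in>{0..1}. A x = QM (R x)" using grp_comp[OF G(1) QM(1) R(1)] by blast
  obtain B where B: "B\<in>G" "\<forall>x\<in>{0..1}. B x = QK (A x)" using grp_comp[OF G(1) QK(1) A(1)] by blast
  have AD: "A \<in> Diff1p" using grp_Diff G(1) A(1) by blast
  have BD: "B \<in> Diff1p" using grp_Diff G(1) B(1) by blast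
  have Rd: "R d \<in> {0..1}" using diff_facts(2)[OF RD d01] .
  have RRd: "R (R d) \<in> {0..1}" using diff_facts(2)[OF RD Rd] .
  have Ad: "A d = (Q^^M) (R d)" using A(2) QM(2) d01 Rd by auto
  have ARd: "A (R d) = (Q^^M) (R (R d))" using A(2) QM(2) Rd RRd by auto
  have Bd: "B d = (Q^^K) ((Q^^M) (R d))" using B(2) QK(2) d01 diff_facts(2)[OF AD d01] Ad by auto
  have BRd: "B (R d) = (Q^^K) ((Q^^M) (R (R d)))" using B(2) QK(2) Rd diff_facts(2)[OF AD Rd] ARd by auto
  show False
    using core[OF G(2) A(1) B(1) AD BD, of "R d" d] d01 Rd MK Ad ARd Bd BRd by auto
qed

lemma oriented:
  assumes G: "is_group01 G" "C1_close_to_id G" and p1: "succ_fixed_pair G a b"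
    and p2: "succ_fixed_pair G c d" and cd1: "card ({a<..<b} \<inter> {c, d}) = 1"
  shows False
proof -
  have ab: "a<b" using pair_facts(1)[OF G(1) p1] .
  have cd: "c<d" using pair_facts(1)[OF G(1) p2] .
  have "(c \<in> {a<..<b} \<and> d \<notin> {a<..<b}) \<or> (d \<in> {a<..<b} \<and> c \<notin> {a<..<b})"
  proof (rule ccontr)
    assume "\<not> ?thesis"
    then have "{a<..<b} \<inter> {c, d} = {} \<or> {a<..<b} \<inter> {c, d} = {c, d}" by auto
    then show False using cd1 cd by auto
  qed
  then show False
  proof
    assume h: "c \<in> {a<..<b} \<and> d \<notin> {a<..<b}"
    then have "b \<le> d" using cd by auto
    then show False using case_i[OF G p1 p2] h by auto
  next
    assume h: "d \<in> {a<..<b} \<and> c \<notin> {a<..<b}"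
    then have "c \<le> a" using cd by auto
    show False
    proof (cases "c = a")
      case True
      then show False using case_iii[OF G p1, of d] p2 h by auto
    next
      case False
      then show False using case_i[OF G p2 p1] h \<open>c \<le> a\<close> by auto
    qed
  qed
qed

theorem theoremt:
  fixes G :: "(real \<Rightarrow> real) set"
  assumes "is_group01 G" and "C1_close_to_id G"
  shows "without_linked_fixed_points G"
  unfolding without_linked_fixed_points_def linked_def
  using oriented[OF assms] by blast

end
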